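(* For every $n\ge1$, the $\mathbb{Q}$-space $I(G,* )\cap P^G_n$ is spanned by the elements $m-\alpha(m)$, where $m$ ranges over strongly multilinear monomials of degree $n$ and $\alpha$ over path transformations of $m$.
   Context: Let $G=\{g_1=e,\dots,g_k\}$ be a finite group of order $k$. Index rows/columns of $k\times k$ matrices by $G$, let $E_{a,b}$ be matrix units, $P_g=\sum_{h\in G}E_{h,hg}$, and give $M_k(\mathbb{C})$ the $G$-crossed-product grading $M_k(\mathbb{C})_g=\{DP_g: D\text{ diagonal}\}$, with involution $*$ = transpose. $F=\mathbb{Q}\{x_{i,g},x^*_{i,g}: i\ge1,g\in G\}$ is the free algebra with involution $*$ exchanging $x_{i,g}\leftrightarrow x^*_{i,g}$. $I(G,* )$ is the set of $f\in F$ vanishing under every substitution $x_{i,g}\mapsto A_{i,g}\in M_k(\mathbb{C})_g$, $x^*_{i,g}\mapsto A_{i,g}^T$. $W_n=S_n\times\{\pm1\}^n$ acts on monomials: for $\alpha=(\pi,\gamma)$ and $m=x_{i_1,\sigma_{i_1}}^{\epsilon_{i_1}}\cdots x_{i_n,\sigma_{i_n}}^{\epsilon_{i_n}}$ ($\{i_1,\dots,i_n\}=\{1,\dots,n\}$), $\alpha(m)=x_{\pi(i_1),\sigma_{\pi(i_1)}}^{\delta_{\pi(i_1)}}\cdots x_{\pi(i_n),\sigma_{\pi(i_n)}}^{\delta_{\pi(i_n)}}$ with $\delta_j=\epsilon_j$ if $\gamma_j=1$ and the opposite choice if $\gamma_j=-1$. A strongly multilinear monomial of degree $n$ is $m=x_{j_1,h_1}^{\epsilon_1}\cdots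 x_{j_n,h_n}^{\epsilon_n}$ with $(j_1,\dots,j_n)$ a permutation of $(1,\dots,n)$, $h_r\in G$, $\epsilon_r\in\{\text{nothing},*\}$; $P^G_n$ is the $\mathbb{Q}$-span of all of them. Put $\tau_r=h_r$ if $\epsilon_r$ is nothing, $\tau_r=h_r^{-1}$ if $\epsilon_r=*$; $w(m)=\tau_1\cdots\tau_n$; for $i=j_r$, $s_m(i)=\tau_1\cdots\tau_{r-1}$ if $\epsilon_r$ is nothing and $s_m(i)=\tau_1\cdots\tau_{r-1}h_r^{-1}$ if $\epsilon_r=*$. $\alpha\in W_n$ is a path transformation of $m$ if $w(\alpha(m))=w(m)$ and $s_{\alpha(m)}(i)=s_m(i)$ for all $i$. *)

theory Defs
  imports Complex_Main "HOL-Algebra.Group" "HOL-Combinatorics.Permutations"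
begin

(* Letters of the free algebra F: (i, g, starred); starred = True means x^*_{i,g}. *)
type_synonym 'g letter = "nat \<times> 'g \<times> bool"
type_synonym 'g word = "'g letter list"
(* Elements of F: Q-valued functions on words (finite support required separately). *)
type_synonym 'g fpoly = "'g word \<Rightarrow> rat"

(* k x k complex matrices with rows/columns indexed by G (entries outside carrier G are irrelevant) *)
type_synonym 'g mat = "'g \<Rightarrow> 'g \<Rightarrow> complex"

definition mmult :: "('g, 'b) monoid_scheme \<Rightarrow> 'g mat \<Rightarrow> 'g mat \<Rightarrow> 'g mat" where
  "mmult G A B = (\<lambda>a b. \<Sum>c\<in>carrier G. A a c * B c b)"

definition idmat :: "'g mat" where
  "idmat = (\<lambda>a b. if a = b then 1 else 0)"

definition diagmat :: "('g \<Rightarrow> complex) \<Rightarrow> 'g mat" where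
  "diagmat d = (\<lambda>a b. if a = b then d a else 0)"

definition transp :: "'g mat \<Rightarrow> 'g mat" where
  "transp A = (\<lambda>a b. A b a)"

definition Pmat :: "('g, 'b) monoid_scheme \<Rightarrow> 'g \<Rightarrow> 'g mat" where
  "Pmat G g = (\<lambda>a b. if b = a \<otimes>\<^bsub>G\<^esub> g then 1 else 0)"

definition grade :: "('g, 'b) monoid_scheme \<Rightarrow> 'g \<Rightarrow> 'g mat set" where
  "grade G g = {mmult G (diagmat d) (Pmat G g) | d. True}"

definition fsupp :: "'g fpoly \<Rightarrow> 'g word set" where
  "fsupp p = {w. p w \<noteq> 0}"

definition Falg :: "('g, 'b) monoid_scheme \<Rightarrow> 'g fpoly set" where
  "Falg G = {p. finite (fsupp p) \<and>
     (\<forall>w\<in>fsupp p. \<forall>l\<in>set w. 1 \<le> fst l \<and> fst (snd l) \<in> carrier G)}"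

definition letmat :: "(nat \<Rightarrow> 'g \<Rightarrow> 'g mat) \<Rightarrow> 'g letter \<Rightarrow> 'g mat" where
  "letmat A l = (case l of (i, g, st) \<Rightarrow> if st then transp (A i g) else A i g)"

definition wordmat :: "('g, 'b) monoid_scheme \<Rightarrow> (nat \<Rightarrow> 'g \<Rightarrow> 'g mat) \<Rightarrow> 'g word \<Rightarrow> 'g mat" where
  "wordmat G A w = foldr (\<lambda>l M. mmult G (letmat A l) M) w idmat"

definition evalp :: "('g, 'b) monoid_scheme \<Rightarrow> (nat \<Rightarrow> 'g \<Rightarrow> 'g mat) \<Rightarrow> 'g fpoly \<Rightarrow> 'g mat" where
  "evalp G A p = (\<lambda>a b. \<Sum>w\<in>fsupp p. of_rat (p w) * wordmat G A w a b)"

definition Istar :: "('g, 'b) monoid_scheme \<Rightarrow> 'g fpoly set" where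
  "Istar G = {f \<in> Falg G. \<forall>A. (\<forall>i g. g \<in> carrier G \<longrightarrow> A i g \<in> grade G g) \<longrightarrow>
      (\<forall>a\<in>carrier G. \<forall>b\<in>carrier G. evalp G A f a b = 0)}"

definition strong_mlin :: "('g, 'b) monoid_scheme \<Rightarrow> nat \<Rightarrow> 'g word \<Rightarrow> bool" where
  "strong_mlin G n m \<longleftrightarrow> length m = n \<and> distinct (map fst m) \<and> set (map fst m) = {1..n}
      \<and> (\<forall>l\<in>set m. fst (snd l) \<in> carrier G)"

definition mono :: "'g word \<Rightarrow> 'g fpoly" where
  "mono m = (\<lambda>w. if w = m then 1 else 0)"

definition PGn :: "('g, 'b) monoid_scheme \<Rightarrow> nat \<Rightarrow> 'g fpoly set" where
  "PGn G n = {p. finite (fsupp p) \<and> (\<forall>w\<in>fsupp p. strong_mlin G n w)}"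

definition Qspan :: "'g fpoly set \<Rightarrow> 'g fpoly set" where
  "Qspan S = {p. \<exists>T c. finite T \<and> T \<subseteq> S \<and> p = (\<lambda>w. \<Sum>t\<in>T. c t * t w)}"

definition letter_of :: "'g word \<Rightarrow> nat \<Rightarrow> 'g letter" where
  "letter_of m j = hd (filter (\<lambda>l. fst l = j) m)"

(* action of alpha = (pi, gamma) in W_n; gamma j = True means gamma_j = 1, False means -1 *)
definition act :: "(nat \<Rightarrow> nat) \<Rightarrow> (nat \<Rightarrow> bool) \<Rightarrow> 'g word \<Rightarrow> 'g word" where
  "act \<pi> \<gamma> m = map (\<lambda>l. let j = \<pi> (fst l); lj = letter_of m j
       in (j, fst (snd lj), if \<gamma> j then snd (snd lj) else \<not> snd (snd lj))) m"

definition tau :: "('g, 'b) monoid_scheme \<Rightarrow> 'g letter \<Rightarrow> 'g" where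
  "tau G l = (if snd (snd l) then inv\<^bsub>G\<^esub> (fst (snd l)) else fst (snd l))"

definition gprod :: "('g, 'b) monoid_scheme \<Rightarrow> 'g list \<Rightarrow> 'g" where
  "gprod G xs = foldl (\<lambda>a b. a \<otimes>\<^bsub>G\<^esub> b) \<one>\<^bsub>G\<^esub> xs"

definition wgt :: "('g, 'b) monoid_scheme \<Rightarrow> 'g word \<Rightarrow> 'g" where
  "wgt G m = gprod G (map (tau G) m)"

definition spos :: "('g, 'b) monoid_scheme \<Rightarrow> 'g word \<Rightarrow> nat \<Rightarrow> 'g" where
  "spos G m r = (let p = gprod G (map (tau G) (take r m)) in
      if snd (snd (m ! r)) then p \<otimes>\<^bsub>G\<^esub> inv\<^bsub>G\<^esub> (fst (snd (m ! r))) else p)"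

definition svar :: "('g, 'b) monoid_scheme \<Rightarrow> 'g word \<Rightarrow> nat \<Rightarrow> 'g" where
  "svar G m i = spos G m (THE r. r < length m \<and> fst (m ! r) = i)"

definition path_transf :: "('g, 'b) monoid_scheme \<Rightarrow> nat \<Rightarrow> 'g word \<Rightarrow> (nat \<Rightarrow> nat) \<Rightarrow> (nat \<Rightarrow> bool) \<Rightarrow> bool" where
  "path_transf G n m \<pi> \<gamma> \<longleftrightarrow> \<pi> permutes {1..n} \<and>
     wgt G (act \<pi> \<gamma> m) = wgt G m \<and>
     (\<forall>i\<in>{1..n}. svar G (act \<pi> \<gamma> m) i = svar G m i)"

end

theory Submission
  imports Defs
begin

definition dv :: "('g, 'b) monoid_scheme \<Rightarrow> (nat \<Rightarrow> 'g \<Rightarrow> 'g mat) \<Rightarrow> nat \<Rightarrow> 'g \<Rightarrow> 'g \<Rightarrow> complex" where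
  "dv G A i h x = A i h x (x \<otimes>\<^bsub>G\<^esub> h)"

definition ptv :: "('g, 'b) monoid_scheme \<Rightarrow> (nat \<Rightarrow> 'g \<Rightarrow> 'g mat) \<Rightarrow> 'g letter \<Rightarrow> 'g \<Rightarrow> complex" where
  "ptv G A l p = (if snd (snd l) then dv G A (fst l) (fst (snd l)) (p \<otimes>\<^bsub>G\<^esub> inv\<^bsub>G\<^esub> (fst (snd l)))
                  else dv G A (fst l) (fst (snd l)) p)"

fun pv :: "('g, 'b) monoid_scheme \<Rightarrow> (nat \<Rightarrow> 'g \<Rightarrow> 'g mat) \<Rightarrow> 'g word \<Rightarrow> 'g \<Rightarrow> complex" where
  "pv G A [] a = 1"
| "pv G A (l # w) a = ptv G A l a * pv G A w (a \<otimes>\<^bsub>G\<^esub> tau G l)"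

definition valid :: "('g, 'b) monoid_scheme \<Rightarrow> (nat \<Rightarrow> 'g \<Rightarrow> 'g mat) \<Rightarrow> bool" where
  "valid G A \<longleftrightarrow> (\<forall>i g. g \<in> carrier G \<longrightarrow> A i g \<in> grade G g)"

definition hg :: "'g word \<Rightarrow> nat \<Rightarrow> 'g" where
  "hg w i = fst (snd (letter_of w i))"

definition key :: "('g, 'b) monoid_scheme \<Rightarrow> nat \<Rightarrow> 'g word \<Rightarrow> 'g \<times> (nat \<Rightarrow> 'g \<times> 'g)" where
  "key G n w = (wgt G w, restrict (\<lambda>i. (hg w i, svar G w i)) {1..n})"

lemma filter_single:
  "distinct (map fst w) \<Longrightarrow> l \<in> set w \<Longrightarrow> filter (\<lambda>x. fst x = fst l) w = [l]"
proof (induction w)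
  case Nil then show ?case by simp
next
  case (Cons x w)
  show ?case
  proof (cases "x = l")
    case True
    then have "fst l \<notin> set (map fst w)" using Cons.prems by simp
    then have "\<forall>y\<in>set w. fst y \<noteq> fst l" by (metis image_eqI set_map)
    then show ?thesis using True by (simp add: filter_empty_conv)
  next
    case False
    then have "l \<in> set w" "fst x \<noteq> fst l" using Cons.prems by force+
    then show ?thesis using Cons by simp
  qed
qed

lemma letter_of_nth:
  "distinct (map fst w) \<Longrightarrow> r < length w \<Longrightarrow> letter_of w (fst (w ! r)) = w ! r"
  unfolding letter_of_def using filter_single[of w "w ! r"] by simp

lemma the_pos:
  assumes "distinct (map fst w)" "r < length w"
  shows "(THE r'. r' < length w \<and> fst (w ! r') = fst (w ! r)) = r"
proof (rule the_equality)
  fix r' assume "r' < length w \<and> fst (w ! r') = fst (w ! r)"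
  then show "r' = r" using assms nth_eq_iff_index_eq[of "map fst w" r' r] by simp
qed (use assms in simp)

lemma svar_nth:
  "distinct (map fst w) \<Longrightarrow> r < length w \<Longrightarrow> svar G w (fst (w ! r)) = spos G w r"
  unfolding svar_def using the_pos by metis

lemma strong_pos:
  assumes "strong_mlin G n w" "i \<in> {1..n}"
  shows "\<exists>r<n. fst (w ! r) = i"
proof -
  have "i \<in> set (map fst w)" using assms unfolding strong_mlin_def by simp
  then obtain r where "r < length (map fst w)" "map fst w ! r = i" by (metis in_set_conv_nth)
  then show ?thesis using assms unfolding strong_mlin_def by auto
qed

lemma key_eq_iff:
  "key G n w = key G n w' \<longleftrightarrow> wgt G w = wgt G w' \<and> (\<forall>i\<in>{1..n}. hg w i = hg w' i \<and> svar G w i = svar G w' i)"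
  unfolding key_def by (auto simp: fun_eq_iff restrict_def split: if_splits)

lemma letter_of_mem:
  assumes "j \<in> set (map fst m)"
  shows "letter_of m j \<in> set m \<and> fst (letter_of m j) = j"
proof -
  have ne: "filter (\<lambda>l. fst l = j) m \<noteq> []" using assms by (auto simp: filter_empty_conv)
  have "hd (filter (\<lambda>l. fst l = j) m) \<in> set (filter (\<lambda>l. fst l = j) m)" using ne by (rule hd_in_set)
  then show ?thesis unfolding letter_of_def by simp
qed

lemma act_nth:
  "r < length m \<Longrightarrow> act \<pi> \<gamma> m ! r = (\<pi> (fst (m ! r)), fst (snd (letter_of m (\<pi> (fst (m ! r))))),
     if \<gamma> (\<pi> (fst (m ! r))) then snd (snd (letter_of m (\<pi> (fst (m ! r)))))
     else \<not> snd (snd (letter_of m (\<pi> (fst (m ! r))))))"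
  by (simp add: act_def Let_def)

lemma map_fst_act: "map fst (act \<pi> \<gamma> m) = map \<pi> (map fst m)"
  by (simp add: act_def Let_def)

lemma act_strong:
  assumes "strong_mlin G n m" "\<pi> permutes {1..n}"
  shows "strong_mlin G n (act \<pi> \<gamma> m)"
proof -
  have len: "length m = n" and dist: "distinct (map fst m)" and st: "set (map fst m) = {1..n}"
    and L: "\<forall>l\<in>set m. fst (snd l) \<in> carrier G"
    using assms(1) unfolding strong_mlin_def by auto
  have inj: "inj_on \<pi> {1..n}" using assms(2) permutes_inj_on by blast
  have d: "distinct (map fst (act \<pi> \<gamma> m))"
    unfolding map_fst_act by (metis dist distinct_map inj st)
  have s: "set (map fst (act \<pi> \<gamma> m)) = {1..n}"
    unfolding map_fst_act set_map[of \<pi>] using st permutes_image[OF assms(2)] by (simp only:)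
  have c: "\<forall>l\<in>set (act \<pi> \<gamma> m). fst (snd l) \<in> carrier G"
  proof
    fix l assume "l \<in> set (act \<pi> \<gamma> m)"
    then obtain r where r: "r < length m" "l = act \<pi> \<gamma> m ! r"
      by (auto simp: in_set_conv_nth act_def)
    have "fst (m ! r) \<in> {1..n}" using r st by (metis nth_map nth_mem length_map)
    then have "\<pi> (fst (m ! r)) \<in> set (map fst m)" using st permutes_in_image[OF assms(2)] by simp
    then have "letter_of m (\<pi> (fst (m ! r))) \<in> set m" using letter_of_mem by blast
    then show "fst (snd l) \<in> carrier G" using r L act_nth[OF r(1)] by simp
  qed
  show ?thesis unfolding strong_mlin_def using d s c len by (simp add: act_def)
qed

lemma hg_act:
  assumes "strong_mlin G n m" "\<pi> permutes {1..n}" "i \<in> {1..n}"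
  shows "hg (act \<pi> \<gamma> m) i = hg m i"
proof -
  have sa: "strong_mlin G n (act \<pi> \<gamma> m)" using act_strong[OF assms(1,2)] .
  obtain r where r: "r < n" "fst (act \<pi> \<gamma> m ! r) = i" using strong_pos[OF sa assms(3)] by blast
  have len: "length m = n" "length (act \<pi> \<gamma> m) = n" using assms(1) sa unfolding strong_mlin_def by auto
  have "letter_of (act \<pi> \<gamma> m) i = act \<pi> \<gamma> m ! r"
    using letter_of_nth[of "act \<pi> \<gamma> m" r] sa r len unfolding strong_mlin_def by auto
  then show ?thesis using act_nth[of r m] r len unfolding hg_def by simp
qed

lemma pos_props:
  assumes "strong_mlin G n m" "i \<in> {1..n}"
  shows "(THE r. r < length m \<and> fst (m ! r) = i) < n \<and> fst (m ! (THE r. r < length m \<and> fst (m ! r) = i)) = i"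
proof -
  obtain r where r: "r < n" "fst (m ! r) = i" using strong_pos[OF assms] by blast
  have "(THE r'. r' < length m \<and> fst (m ! r') = fst (m ! r)) = r"
    using the_pos[of m r] assms r unfolding strong_mlin_def by auto
  then show ?thesis using r by simp
qed

lemma exists_act:
  assumes sm: "strong_mlin G n m" and sm': "strong_mlin G n m'" and k: "key G n m = key G n m'"
  shows "\<exists>\<pi> \<gamma>. act \<pi> \<gamma> m = m' \<and> path_transf G n m \<pi> \<gamma>"
proof -
  have len: "length m = n" and dist: "distinct (map fst m)" and st: "set (map fst m) = {1..n}"
    using sm unfolding strong_mlin_def by auto
  have len': "length m' = n" and dist': "distinct (map fst m')" and st': "set (map fst m') = {1..n}"
    using sm' unfolding strong_mlin_def by auto
  define pos where "pos i = (THE r. r < length m \<and> fst (m ! r) = i)" for i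
  define \<pi> where "\<pi> i = (if i \<in> {1..n} then fst (m' ! pos i) else i)" for i
  define \<gamma> where "\<gamma> j = (snd (snd (letter_of m' j)) = snd (snd (letter_of m j)))" for j
  have pp: "pos i < n \<and> fst (m ! pos i) = i" if "i \<in> {1..n}" for i
    using pos_props[OF sm that] unfolding pos_def .
  have into: "\<pi> i \<in> {1..n}" if "i \<in> {1..n}" for i
  proof -
    have "fst (m' ! pos i) \<in> set (map fst m')" using pp[OF that] len' by (metis nth_map nth_mem length_map)
    then show ?thesis using that st' unfolding \<pi>_def by simp
  qed
  have inj: "inj_on \<pi> {1..n}"
  proof (rule inj_onI)
    fix i i' assume i: "i \<in> {1..n}" "i' \<in> {1..n}" "\<pi> i = \<pi> i'"
    then have "map fst m' ! pos i = map fst m' ! pos i'" using pp len' unfolding \<pi>_def by simp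
    then have "pos i = pos i'" using nth_eq_iff_index_eq[OF dist'] pp i len' by simp
    then show "i = i'" using pp i by metis
  qed
  have sub: "\<pi> ` {1..n} \<subseteq> {1..n}" using into by auto
  have img: "\<pi> ` {1..n} = {1..n}" using endo_inj_surj[OF finite_atLeastAtMost sub inj] .
  have perm: "\<pi> permutes {1..n}"
  proof (rule bij_imp_permutes)
    show "bij_betw \<pi> {1..n} {1..n}" unfolding bij_betw_def using inj img by blast
  qed (auto simp add: \<pi>_def)
  have actm: "act \<pi> \<gamma> m = m'"
  proof (rule nth_equalityI)
    show "length (act \<pi> \<gamma> m) = length m'" using len len' by (simp add: act_def)
  next
    fix r assume "r < length (act \<pi> \<gamma> m)"
    then have r: "r < n" using len by (simp add: act_def)
    define i where "i = fst (m ! r)"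
    have iin: "i \<in> {1..n}" using st r len unfolding i_def by (metis nth_map nth_mem length_map)
    have posr: "pos i = r" unfolding pos_def i_def using the_pos[OF dist, of r] r len by simp
    define j where "j = \<pi> i"
    have j: "j = fst (m' ! r)" unfolding j_def \<pi>_def using iin posr by simp
    have jin: "j \<in> {1..n}" using into[OF iin] j_def by simp
    have lj: "letter_of m' j = m' ! r" using letter_of_nth[OF dist', of r] r len' j by simp
    have hgj: "hg m j = hg m' j" using k jin unfolding key_eq_iff by blast
    have an: "act \<pi> \<gamma> m ! r = (j, fst (snd (letter_of m j)),
       if \<gamma> j then snd (snd (letter_of m j)) else \<not> snd (snd (letter_of m j)))"
      using act_nth[of r m \<pi> \<gamma>] r len unfolding j_def i_def by simp
    show "act \<pi> \<gamma> m ! r = m' ! r"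
      unfolding an using hgj lj j unfolding hg_def \<gamma>_def by (auto simp: prod_eq_iff)
  qed
  have "key G n (act \<pi> \<gamma> m) = key G n m" using actm k by simp
  then have "path_transf G n m \<pi> \<gamma>" unfolding path_transf_def key_eq_iff using perm by simp
  then show ?thesis using actm by blast
qed

lemma evalp_sup:
  assumes "finite W" "fsupp p \<subseteq> W"
  shows "evalp G A p a b = (\<Sum>w\<in>W. of_rat (p w) * wordmat G A w a b)"
  unfolding evalp_def
  by (rule sum.mono_neutral_left[OF assms(1,2)]) (auto simp: fsupp_def)

lemma qspan_sum:
  assumes "finite S" "\<forall>w\<in>S. g w \<in> X"
  shows "(\<lambda>u. \<Sum>w\<in>S. c w * g w u) \<in> Qspan X"
proof -
  define ct where "ct t = (\<Sum>w\<in>{w\<in>S. g w = t}. c w)" for t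
  have "(\<lambda>u. \<Sum>w\<in>S. c w * g w u) = (\<lambda>u. \<Sum>t\<in>g ` S. ct t * t u)"
  proof
    fix u
    have "(\<Sum>w\<in>S. c w * g w u) = (\<Sum>t\<in>g ` S. \<Sum>w\<in>{w\<in>S. g w = t}. c w * g w u)"
      using sum.image_gen[OF assms(1), of "\<lambda>w. c w * g w u" g] .
    also have "\<dots> = (\<Sum>t\<in>g ` S. ct t * t u)"
      unfolding ct_def sum_distrib_right by (intro sum.cong refl) auto
    finally show "(\<Sum>w\<in>S. c w * g w u) = (\<Sum>t\<in>g ` S. ct t * t u)" .
  qed
  then show ?thesis unfolding Qspan_def using assms by blast
qed

lemma gen_props:
  assumes "t \<in> {(\<lambda>w. mono m w - mono (act \<pi> \<gamma> m) w) | m \<pi> \<gamma>. strong_mlin G n m \<and> path_transf G n m \<pi> \<gamma>}"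
  shows "\<exists>m m'. t = (\<lambda>w. mono m w - mono m' w) \<and> strong_mlin G n m \<and> strong_mlin G n m' \<and> key G n m = key G n m'"
proof -
  obtain m \<pi> \<gamma> where t: "t = (\<lambda>w. mono m w - mono (act \<pi> \<gamma> m) w)" and sm: "strong_mlin G n m"
    and pt: "path_transf G n m \<pi> \<gamma>" using assms by blast
  have perm: "\<pi> permutes {1..n}" using pt unfolding path_transf_def by simp
  have "key G n m = key G n (act \<pi> \<gamma> m)"
    using pt hg_act[OF sm perm] unfolding path_transf_def key_eq_iff by simp
  then show ?thesis using t sm act_strong[OF sm perm] by blast
qed

lemma fsupp_gen: "fsupp (\<lambda>w. mono m w - mono m' w) \<subseteq> {m, m'}"
  by (auto simp: fsupp_def mono_def)

lemma prod_indicator: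
  "finite A \<Longrightarrow> (\<Prod>i\<in>A. if P i then 1 else 0 :: complex) = (if \<forall>i\<in>A. P i then 1 else 0)"
  by (cases "\<forall>i\<in>A. P i") (auto intro: prod.neutral simp: prod_zero_iff)

locale fgroup = group +
  assumes fin: "finite (carrier G)"
begin

lemma grade_entry:
  assumes "g \<in> carrier G"
  shows "mmult G (diagmat d) (Pmat G g) x y = (if x \<in> carrier G \<and> y = x \<otimes> g then d x else 0)"
proof -
  have "mmult G (diagmat d) (Pmat G g) x y =
      (\<Sum>c\<in>carrier G. (if c = x then (if y = c \<otimes> g then d x else 0) else 0))"
    unfolding mmult_def diagmat_def Pmat_def by (intro sum.cong) auto
  also have "\<dots> = (if x \<in> carrier G \<and> y = x \<otimes> g then d x else 0)"
    using fin by (simp add: sum.delta)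
  finally show ?thesis .
qed

lemma A_form:
  assumes "valid G A" "g \<in> carrier G" "x \<in> carrier G"
  shows "A i g x y = (if y = x \<otimes> g then dv G A i g x else 0)"
proof -
  obtain d where d: "A i g = mmult G (diagmat d) (Pmat G g)"
    using assms unfolding valid_def grade_def by blast
  show ?thesis unfolding dv_def d grade_entry[OF assms(2)] using assms(3) by simp
qed

lemma letmat_row:
  assumes "valid G A" "fst (snd l) \<in> carrier G" "a \<in> carrier G" "c \<in> carrier G"
  shows "letmat A l a c = (if c = a \<otimes> tau G l then ptv G A l a else 0)"
proof (cases l)
  case (fields i h st)
  show ?thesis
  proof (cases st)
    case True
    have h: "h \<in> carrier G" using assms fields by simp
    have "(a = c \<otimes> h) = (c = a \<otimes> inv h)"
      using h assms(3,4) by (metis inv_solve_right)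
    then show ?thesis using True fields assms h
      by (simp add: letmat_def transp_def A_form tau_def ptv_def)
  next
    case False
    then show ?thesis using fields assms
      by (simp add: letmat_def A_form tau_def ptv_def)
  qed
qed

lemma tau_closed: "fst (snd l) \<in> carrier G \<Longrightarrow> tau G l \<in> carrier G"
  by (simp add: tau_def)

lemma foldl_gprod:
  "x \<in> carrier G \<Longrightarrow> set xs \<subseteq> carrier G \<Longrightarrow>
   foldl (\<lambda>a b. a \<otimes> b) x xs = x \<otimes> gprod G xs \<and> gprod G xs \<in> carrier G"
proof (induction xs arbitrary: x)
  case Nil then show ?case by (simp add: gprod_def)
next
  case (Cons y ys)
  have "foldl (\<lambda>a b. a \<otimes> b) x (y # ys) = foldl (\<lambda>a b. a \<otimes> b) (x \<otimes> y) ys" by simp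
  also have "\<dots> = (x \<otimes> y) \<otimes> gprod G ys" using Cons by simp
  finally have 1: "foldl (\<lambda>a b. a \<otimes> b) x (y # ys) = (x \<otimes> y) \<otimes> gprod G ys" .
  have 2: "gprod G (y # ys) = y \<otimes> gprod G ys"
    using Cons.IH[of y] Cons.prems by (simp add: gprod_def)
  show ?case using 1 2 Cons by (simp add: m_assoc)
qed

lemma gprod_Cons: "y \<in> carrier G \<Longrightarrow> set ys \<subseteq> carrier G \<Longrightarrow> gprod G (y # ys) = y \<otimes> gprod G ys"
  using foldl_gprod[of y ys] by (simp add: gprod_def)

lemma gprod_closed: "set ys \<subseteq> carrier G \<Longrightarrow> gprod G ys \<in> carrier G"
  using foldl_gprod[of \<one> ys] by simp

lemma wordmat_pv:
  assumes "valid G A" "\<forall>l\<in>set w. fst (snd l) \<in> carrier G" "a \<in> carrier G"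
  shows "wordmat G A w a b = (if b = a \<otimes> gprod G (map (tau G) w) then pv G A w a else 0)"
  using assms(2,3)
proof (induction w arbitrary: a)
  case Nil then show ?case by (simp add: wordmat_def idmat_def gprod_def)
next
  case (Cons l w)
  have tl: "tau G l \<in> carrier G" using Cons.prems tau_closed by simp
  have al: "a \<otimes> tau G l \<in> carrier G" using tl Cons.prems by simp
  have ws: "set (map (tau G) w) \<subseteq> carrier G" using Cons.prems tau_closed by auto
  have "wordmat G A (l # w) a b = (\<Sum>c\<in>carrier G. letmat A l a c * wordmat G A w c b)"
    by (simp add: wordmat_def mmult_def)
  also have "\<dots> = (\<Sum>c\<in>carrier G. if c = a \<otimes> tau G l then ptv G A l a * wordmat G A w c b else 0)"
    using Cons.prems assms(1) by (intro sum.cong) (auto simp: letmat_row)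
  also have "\<dots> = ptv G A l a * wordmat G A w (a \<otimes> tau G l) b"
    using al fin by (simp add: sum.delta)
  also have "\<dots> = (if b = (a \<otimes> tau G l) \<otimes> gprod G (map (tau G) w) then pv G A (l # w) a else 0)"
    using Cons.IH[OF _ al] Cons.prems by simp
  also have "(a \<otimes> tau G l) \<otimes> gprod G (map (tau G) w) = a \<otimes> gprod G (map (tau G) (l # w))"
    using gprod_Cons[OF tl ws] tl ws Cons.prems gprod_closed by (simp add: m_assoc)
  finally show ?case .
qed

lemma taus_take:
  "\<forall>l\<in>set w. fst (snd l) \<in> carrier G \<Longrightarrow> set (map (tau G) (take r w)) \<subseteq> carrier G"
proof -
  assume a: "\<forall>l\<in>set w. fst (snd l) \<in> carrier G"
  have "\<forall>l\<in>set (take r w). fst (snd l) \<in> carrier G" using a by (meson in_set_takeD)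
  then show ?thesis using tau_closed by auto
qed

lemma pv_prod:
  assumes "\<forall>l\<in>set w. fst (snd l) \<in> carrier G" "a \<in> carrier G"
  shows "pv G A w a = (\<Prod>r<length w. ptv G A (w ! r) (a \<otimes> gprod G (map (tau G) (take r w))))"
  using assms
proof (induction w arbitrary: a)
  case Nil then show ?case by simp
next
  case (Cons l w)
  have tl: "tau G l \<in> carrier G" using Cons.prems tau_closed by simp
  have al: "a \<otimes> tau G l \<in> carrier G" using tl Cons.prems by simp
  have e2: "a \<otimes> gprod G (map (tau G) (take (Suc r) (l # w))) =
            (a \<otimes> tau G l) \<otimes> gprod G (map (tau G) (take r w))" for r
  proof -
    have ws: "set (map (tau G) (take r w)) \<subseteq> carrier G"
      using Cons.prems by (intro taus_take) auto
    show ?thesis using gprod_Cons[OF tl ws] ws tl Cons.prems gprod_closed[OF ws] by (simp add: m_assoc)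
  qed
  define F where "F r = ptv G A ((l # w) ! r) (a \<otimes> gprod G (map (tau G) (take r (l # w))))" for r
  have "(\<Prod>r<length (l # w). F r) = F 0 * (\<Prod>r<length w. F (Suc r))"
    by (simp only: length_Cons prod.lessThan_Suc_shift)
  moreover have "F 0 = ptv G A l a" using Cons.prems by (simp add: F_def gprod_def)
  moreover have "F (Suc r) = ptv G A (w ! r) ((a \<otimes> tau G l) \<otimes> gprod G (map (tau G) (take r w)))" for r
    unfolding F_def e2 by simp
  ultimately show ?case
    using Cons.IH[OF _ al] Cons.prems unfolding F_def by simp
qed

lemma spos_closed:
  assumes "\<forall>l\<in>set w. fst (snd l) \<in> carrier G" "r < length w"
  shows "spos G w r \<in> carrier G"
proof -
  have ws: "set (map (tau G) (take r w)) \<subseteq> carrier G"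
    using assms by (intro taus_take) auto
  have "fst (snd (w ! r)) \<in> carrier G" using assms by simp
  then show ?thesis using gprod_closed[OF ws] unfolding spos_def Let_def by simp
qed

lemma svar_closed:
  assumes "strong_mlin G n w" "i \<in> {1..n}"
  shows "svar G w i \<in> carrier G"
proof -
  obtain r where r: "r < n" "fst (w ! r) = i" using strong_pos[OF assms] by blast
  then show ?thesis using assms svar_nth[of w r G] spos_closed[of w r]
    unfolding strong_mlin_def by auto
qed

lemma wgt_closed: "\<forall>l\<in>set w. fst (snd l) \<in> carrier G \<Longrightarrow> wgt G w \<in> carrier G"
  unfolding wgt_def using tau_closed by (intro gprod_closed) auto

lemma wordmat_strong:
  assumes "valid G A" "strong_mlin G n w" "a \<in> carrier G"
  shows "wordmat G A w a b = (if b = a \<otimes> wgt G w then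
           (\<Prod>i\<in>{1..n}. dv G A i (hg w i) (a \<otimes> svar G w i)) else 0)"
proof -
  have L: "\<forall>l\<in>set w. fst (snd l) \<in> carrier G" and len: "length w = n"
    and dist: "distinct (map fst w)" and st: "set (map fst w) = {1..n}"
    using assms(2) unfolding strong_mlin_def by auto
  define g where "g i = dv G A i (hg w i) (a \<otimes> svar G w i)" for i
  have trm: "ptv G A (w ! r) (a \<otimes> gprod G (map (tau G) (take r w))) = g (fst (w ! r))"
    if r: "r < n" for r
  proof -
    have ws: "set (map (tau G) (take r w)) \<subseteq> carrier G"
      using L by (intro taus_take) auto
    have h: "fst (snd (w ! r)) \<in> carrier G" using L r len by simp
    show ?thesis
      unfolding g_def using letter_of_nth[OF dist, of r] svar_nth[OF dist, of r G] r len
        gprod_closed[OF ws] h assms(3)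
      by (simp add: ptv_def hg_def spos_def Let_def m_assoc)
  qed
  have bij: "bij_betw (\<lambda>r. fst (w ! r)) {..<n} {1..n}"
  proof -
    have "bij_betw ((!) (map fst w)) {..<n} {1..n}"
      using bij_betw_nth[OF dist] len st by simp
    then show ?thesis by (rule bij_betw_cong[THEN iffD1, rotated]) (simp add: len)
  qed
  have "pv G A w a = (\<Prod>r<n. g (fst (w ! r)))"
    using pv_prod[OF L assms(3), of A] len trm by simp
  also have "\<dots> = (\<Prod>i\<in>{1..n}. g i)"
    using prod.reindex_bij_betw[OF bij, of g] .
  finally show ?thesis
    using wordmat_pv[OF assms(1) L assms(3), of b] unfolding wgt_def g_def by simp
qed

lemma wordmat_key:
  assumes "valid G A" "strong_mlin G n m" "strong_mlin G n m'" "key G n m = key G n m'" "a \<in> carrier G"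
  shows "wordmat G A m a b = wordmat G A m' a b"
proof -
  have k: "wgt G m = wgt G m'" "\<forall>i\<in>{1..n}. hg m i = hg m' i \<and> svar G m i = svar G m' i"
    using assms(4) unfolding key_eq_iff by auto
  have "(\<Prod>i\<in>{1..n}. dv G A i (hg m i) (a \<otimes> svar G m i)) = (\<Prod>i\<in>{1..n}. dv G A i (hg m' i) (a \<otimes> svar G m' i))"
    using k(2) by (intro prod.cong) auto
  then show ?thesis using wordmat_strong[OF assms(1,2,5)] wordmat_strong[OF assms(1,3,5)] k(1) by simp
qed

lemma gen_eval:
  assumes "valid G A" "a \<in> carrier G" "strong_mlin G n m" "strong_mlin G n m'" "key G n m = key G n m'"
  shows "evalp G A (\<lambda>w. mono m w - mono m' w) a b = 0"
proof -
  have e: "evalp G A (\<lambda>w. mono m w - mono m' w) a b =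
    (\<Sum>w\<in>{m, m'}. of_rat (mono m w - mono m' w) * wordmat G A w a b)"
    by (rule evalp_sup) (use fsupp_gen[of m m'] in auto)
  show ?thesis
  proof (cases "m = m'")
    case True then show ?thesis using e by simp
  next
    case False
    then show ?thesis using e wordmat_key[OF assms(1,3,4,5,2), of b] by (simp add: mono_def)
  qed
qed

lemma strong_Falg: "strong_mlin G n w \<Longrightarrow> l \<in> set w \<Longrightarrow> 1 \<le> fst l \<and> fst (snd l) \<in> carrier G"
  unfolding strong_mlin_def by (metis atLeastAtMost_iff image_eqI set_map)

lemma span_sub:
  assumes "p \<in> Qspan {(\<lambda>w. mono m w - mono (act \<pi> \<gamma> m) w) | m \<pi> \<gamma>. strong_mlin G n m \<and> path_transf G n m \<pi> \<gamma>}"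
    (is "p \<in> Qspan ?X")
  shows "p \<in> Istar G \<inter> PGn G n"
proof -
  obtain T c where T: "finite T" "T \<subseteq> ?X" and p: "p = (\<lambda>w. \<Sum>t\<in>T. c t * t w)"
    using assms unfolding Qspan_def by blast
  have gp: "\<exists>m m'. t = (\<lambda>w. mono m w - mono m' w) \<and> strong_mlin G n m \<and> strong_mlin G n m' \<and> key G n m = key G n m'"
    if "t \<in> T" for t using gen_props[of t] that T by blast
  define W where "W = \<Union> (fsupp ` T)"
  have tW: "fsupp t \<subseteq> W" if "t \<in> T" for t using that unfolding W_def by blast
  have fint: "finite (fsupp t) \<and> (\<forall>w\<in>fsupp t. strong_mlin G n w)" if tT: "t \<in> T" for t
  proof -
    obtain m m' where "t = (\<lambda>w. mono m w - mono m' w)" "strong_mlin G n m" "strong_mlin G n m'"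
      using gp[OF tT] by blast
    then show ?thesis using fsupp_gen[of m m'] finite_subset[of "fsupp t" "{m, m'}"] by auto
  qed
  have finW: "finite W" unfolding W_def using T fint by blast
  have strW: "\<forall>w\<in>W. strong_mlin G n w" unfolding W_def using fint by blast
  have supp: "fsupp p \<subseteq> W"
  proof
    fix w assume "w \<in> fsupp p"
    then have "(\<Sum>t\<in>T. c t * t w) \<noteq> 0" unfolding fsupp_def p by simp
    then obtain t where "t \<in> T" "c t * t w \<noteq> 0" by (meson sum.not_neutral_contains_not_neutral)
    then show "w \<in> W" unfolding W_def fsupp_def by auto
  qed
  have finp: "finite (fsupp p)" using finite_subset[OF supp finW] .
  have PG: "p \<in> PGn G n" unfolding PGn_def using finp supp strW by blast
  have FA: "p \<in> Falg G" unfolding Falg_def using finp supp strW strong_Falg by blast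
  have ev: "evalp G A p a b = 0" if A: "valid G A" and a: "a \<in> carrier G" for A a b
  proof -
    have "evalp G A p a b = (\<Sum>w\<in>W. of_rat (p w) * wordmat G A w a b)"
      by (rule evalp_sup[OF finW supp])
    also have "\<dots> = (\<Sum>w\<in>W. \<Sum>t\<in>T. of_rat (c t) * (of_rat (t w) * wordmat G A w a b))"
      unfolding p by (simp add: of_rat_sum of_rat_mult sum_distrib_right mult.assoc)
    also have "\<dots> = (\<Sum>t\<in>T. of_rat (c t) * (\<Sum>w\<in>W. of_rat (t w) * wordmat G A w a b))"
      by (subst sum.swap) (simp add: sum_distrib_left)
    also have "\<dots> = (\<Sum>t\<in>T. of_rat (c t) * evalp G A t a b)"
      using evalp_sup[OF finW tW, of _ G A a b] by (intro sum.cong refl) simp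
    also have "\<dots> = 0"
    proof (rule sum.neutral, rule ballI)
      fix t assume t: "t \<in> T"
      obtain m m' where "t = (\<lambda>w. mono m w - mono m' w)" "strong_mlin G n m" "strong_mlin G n m'"
        "key G n m = key G n m'" using gp[OF t] by blast
      then show "of_rat (c t) * evalp G A t a b = 0" using gen_eval[OF A a] by simp
    qed
    finally show ?thesis .
  qed
  have "p \<in> Istar G" unfolding Istar_def using FA ev unfolding valid_def by blast
  then show ?thesis using PG by blast
qed

lemma hg_closed: "strong_mlin G n w \<Longrightarrow> i \<in> {1..n} \<Longrightarrow> hg w i \<in> carrier G"
  unfolding hg_def using letter_of_mem[of i w] unfolding strong_mlin_def by auto

lemma class_zero:
  assumes f: "f \<in> Istar G \<inter> PGn G n" and w0: "w0 \<in> fsupp f"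
  shows "(\<Sum>w\<in>{w\<in>fsupp f. key G n w = key G n w0}. f w) = 0"
proof -
  have finS: "finite (fsupp f)" and strS: "\<forall>w\<in>fsupp f. strong_mlin G n w"
    using f unfolding PGn_def by auto
  have s0: "strong_mlin G n w0" using strS w0 by blast
  define d where "d i h x = (if i \<in> {1..n} \<and> h = hg w0 i \<and> x = svar G w0 i then 1 else (0::complex))"
    for i h x
  define A where "A i h = mmult G (diagmat (d i h)) (Pmat G h)" for i h
  have vA: "valid G A" unfolding valid_def A_def grade_def by blast
  have dvA: "dv G A i h x = d i h x" if "h \<in> carrier G" "x \<in> carrier G" for i h x
    unfolding dv_def A_def grade_entry[OF that(1)] using that by simp
  have wm: "wordmat G A w \<one> (wgt G w0) = (if key G n w = key G n w0 then 1 else 0)"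
    if sw: "strong_mlin G n w" for w
  proof -
    have "(\<Prod>i\<in>{1..n}. dv G A i (hg w i) (\<one> \<otimes> svar G w i)) =
          (\<Prod>i\<in>{1..n}. if hg w i = hg w0 i \<and> svar G w i = svar G w0 i then 1 else 0)"
      using hg_closed[OF sw] svar_closed[OF sw] by (intro prod.cong refl) (auto simp: dvA d_def)
    also have "\<dots> = (if \<forall>i\<in>{1..n}. hg w i = hg w0 i \<and> svar G w i = svar G w0 i then 1 else 0)"
      by (rule prod_indicator) simp
    finally show ?thesis
      using wordmat_strong[OF vA sw one_closed, of "wgt G w0"] wgt_closed[of w] sw
      unfolding key_eq_iff strong_mlin_def by auto
  qed
  have "evalp G A f \<one> (wgt G w0) = (\<Sum>w\<in>fsupp f. of_rat (f w) * (if key G n w = key G n w0 then 1 else 0))"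
    unfolding evalp_def using wm strS by (intro sum.cong refl) auto
  also have "\<dots> = of_rat (\<Sum>w\<in>{w\<in>fsupp f. key G n w = key G n w0}. f w)"
    using finS by (simp add: sum.inter_filter[symmetric] of_rat_sum if_distrib cong: if_cong)
  finally have e: "evalp G A f \<one> (wgt G w0) = of_rat (\<Sum>w\<in>{w\<in>fsupp f. key G n w = key G n w0}. f w)" .
  have wc: "wgt G w0 \<in> carrier G" using wgt_closed s0 unfolding strong_mlin_def by auto
  have "evalp G A f \<one> (wgt G w0) = 0" using f vA wc unfolding Istar_def valid_def by auto
  then show ?thesis using e by simp
qed

lemma sub_span:
  assumes f: "f \<in> Istar G \<inter> PGn G n"
  shows "f \<in> Qspan {(\<lambda>w. mono m w - mono (act \<pi> \<gamma> m) w) | m \<pi> \<gamma>. strong_mlin G n m \<and> path_transf G n m \<pi> \<gamma>}"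
    (is "f \<in> Qspan ?X")
proof -
  define S where "S = fsupp f"
  have finS: "finite S" and strS: "\<forall>w\<in>S. strong_mlin G n w"
    using f unfolding PGn_def S_def by auto
  define rep where "rep w = (SOME v. v \<in> S \<and> key G n v = key G n w)" for w
  have rp: "rep w \<in> S \<and> key G n (rep w) = key G n w" if "w \<in> S" for w
    unfolding rep_def by (rule someI[of _ w]) (use that in simp)
  have rcong: "rep w = rep w'" if "key G n w = key G n w'" for w w'
    unfolding rep_def using that by simp
  have gen: "(\<lambda>u. mono w u - mono (rep w) u) \<in> ?X" if w: "w \<in> S" for w
  proof -
    obtain \<pi> \<gamma> where "act \<pi> \<gamma> w = rep w" "path_transf G n w \<pi> \<gamma>"
      using exists_act[of G n w "rep w"] strS rp[OF w] w by metis
    then show ?thesis using strS w by force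
  qed
  have feq: "f = (\<lambda>u. \<Sum>w\<in>S. f w * (mono w u - mono (rep w) u))"
  proof
    fix u
    have 1: "(\<Sum>w\<in>S. f w * mono w u) = f u"
    proof -
      have "(\<Sum>w\<in>S. f w * mono w u) = (\<Sum>w\<in>S. if w = u then f w else 0)"
        by (intro sum.cong refl) (simp add: mono_def)
      also have "\<dots> = f u" using finS by (simp add: sum.delta S_def fsupp_def)
      finally show ?thesis .
    qed
    have 2: "(\<Sum>w\<in>S. f w * mono (rep w) u) = 0"
    proof -
      have "(\<Sum>w\<in>S. f w * mono (rep w) u) = (\<Sum>w\<in>{w\<in>S. rep w = u}. f w)"
      proof -
        have "(\<Sum>w\<in>S. f w * mono (rep w) u) = (\<Sum>w\<in>S. if rep w = u then f w else 0)"
          by (intro sum.cong refl) (auto simp: mono_def)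
        also have "\<dots> = (\<Sum>w\<in>{w\<in>S. rep w = u}. f w)"
          using finS by (simp add: sum.inter_filter)
        finally show ?thesis .
      qed
      also have "\<dots> = 0"
      proof (cases "\<exists>w0\<in>S. rep w0 = u")
        case True
        then obtain w0 where w0: "w0 \<in> S" "rep w0 = u" by blast
        have "{w\<in>S. rep w = u} = {w\<in>S. key G n w = key G n w0}"
        proof (intro Collect_cong conj_cong refl iffI)
          fix w assume "w \<in> S" "rep w = u"
          then show "key G n w = key G n w0" using rp w0 by metis
        next
          fix w assume "key G n w = key G n w0"
          then show "rep w = u" using rcong w0 by metis
        qed
        then show ?thesis using class_zero[OF f] w0 unfolding S_def by simp
      next
        case False
        then have "{w\<in>S. rep w = u} = {}" by blast
        then show ?thesis by (simp only: sum.empty)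
      qed
      finally show ?thesis .
    qed
    show "f u = (\<Sum>w\<in>S. f w * (mono w u - mono (rep w) u))"
      using 1 2 by (simp add: right_diff_distrib sum_subtractf)
  qed
  show ?thesis
    by (subst feq, rule qspan_sum[OF finS]) (use gen in blast)
qed

end

theorem mainTheorem4:
  fixes G :: "('g, 'b) monoid_scheme" and n :: nat
  assumes "group G" and "finite (carrier G)" and "1 \<le> n"
  shows "Istar G \<inter> PGn G n =
    Qspan {(\<lambda>w. mono m w - mono (act \<pi> \<gamma> m) w) | m \<pi> \<gamma>. strong_mlin G n m \<and> path_transf G n m \<pi> \<gamma>}"
proof -
  interpret fgroup G
    using assms(1,2) by (simp add: fgroup_def fgroup_axioms_def)
  show ?thesis using sub_span span_sub by blast
qed

end
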